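(* Let $A$ be either quadratic or cubic (as in the context), let $(a_i),(b_i)$ be finitely supported integer sequences, neither identically zero, and $q_i=a_i-b_i$. The following are equivalent. (1) With $q_\mu$ the lowest-index and $q_\nu$ the highest-index nonzero $q_i$: (a) $a_l=0$ for $l<\mu$ and $l\ge\nu$; (b) $a_\mu=q_\mu>0$; (c) $\sum_iq_i=0$; (d) $\max(q_l,0)\le a_l<\sum_{i\le l}q_i$ for $\mu<l<\nu$; (e) if $A$ is cubic, it is not true that ($a_\mu\ge2$ and $\mu=\nu-1$). (2) With $a_\mu$ the lowest-index nonzero $a_i$ and $b_\nu$ the highest-index nonzero $b_i$, and $n=\sum_ib_i$: (a) all $a_i,b_i\ge0$; (b) $a_l=0$ for $l\ge\nu$, $b_l=0$ for $l\le\mu$; (c) $\sum_ia_i=\sum_ib_i$; (d) $\sum_{i\le l}b_i<\sum_{i<l}a_i$ for $\mu<l<\nu$; (e) if $A$ is cubic, it is not true that ($n\ge2$ and $\mu=\nu-1$). (3) With $m=\sum a_i$, $n=\sum b_i$: (a) all $a_i,b_i\ge0$; (b) $m=n$; (c) for all $1\le\alpha\le m$, $1\le\beta\le n$ with $\beta\ge\alpha-1$, $S(a)_\alpha<S(b)_\beta$; (d) if $A$ is cubic, it is not true that ($n\ge2$ and $S(b)_\beta-S(a)_\alpha=1$ for all $\alpha,\beta$).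
   Context: $A$ is a generic three-dimensional Artin–Schelter regular algebra generated in degree one, of "quadratic" type (three generators, three quadratic relations) or "cubic" type (two generators, two cubic relations); only this dichotomy matters here. For a finitely supported sequence $(c_i)$ of non-negative integers, $S(c)$ is the nondecreasing sequence of length $\sum_ic_i$, indexed from $1$, in which each integer $i$ appears exactly $c_i$ times. *)

theory Defs
  imports Main
begin

text \<open>Finitely supported integer sequences indexed by integers are modelled as
  functions int => int with finite support.\<close>

definition supp :: "(int \<Rightarrow> int) \<Rightarrow> int set" where
  "supp c = {i. c i \<noteq> 0}"

definition total :: "(int \<Rightarrow> int) \<Rightarrow> int" where
  "total c = (\<Sum>i\<in>supp c. c i)"

definition psum_le :: "(int \<Rightarrow> int) \<Rightarrow> int \<Rightarrow> int" where
  "psum_le c l = (\<Sum>i\<in>{i\<in>supp c. i \<le> l}. c i)"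

definition psum_lt :: "(int \<Rightarrow> int) \<Rightarrow> int \<Rightarrow> int" where
  "psum_lt c l = (\<Sum>i\<in>{i\<in>supp c. i < l}. c i)"

text \<open>S(c) as a list: nondecreasing, each integer i appears c i times
  (for non-negative c). The paper's S(c)_alpha (indexed from 1) is Sseq c alpha.\<close>
definition Slist :: "(int \<Rightarrow> int) \<Rightarrow> int list" where
  "Slist c = concat (map (\<lambda>i. replicate (nat (c i)) i) (sorted_list_of_set (supp c)))"

definition Sseq :: "(int \<Rightarrow> int) \<Rightarrow> nat \<Rightarrow> int" where
  "Sseq c \<alpha> = Slist c ! (\<alpha> - 1)"

definition cond1 :: "bool \<Rightarrow> (int \<Rightarrow> int) \<Rightarrow> (int \<Rightarrow> int) \<Rightarrow> bool" where
  "cond1 cubic a b = (let q = (\<lambda>i. a i - b i) in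
     supp q \<noteq> {} \<and>
     (let \<mu> = Min (supp q); \<nu> = Max (supp q) in
       (\<forall>l. (l < \<mu> \<or> l \<ge> \<nu>) \<longrightarrow> a l = 0) \<and>
       a \<mu> = q \<mu> \<and> q \<mu> > 0 \<and>
       total q = 0 \<and>
       (\<forall>l. \<mu> < l \<and> l < \<nu> \<longrightarrow> max (q l) 0 \<le> a l \<and> a l < psum_le q l) \<and>
       (cubic \<longrightarrow> \<not> (a \<mu> \<ge> 2 \<and> \<mu> = \<nu> - 1))))"

definition cond2 :: "bool \<Rightarrow> (int \<Rightarrow> int) \<Rightarrow> (int \<Rightarrow> int) \<Rightarrow> bool" where
  "cond2 cubic a b = (let \<mu> = Min (supp a); \<nu> = Max (supp b); n = total b in
     (\<forall>i. a i \<ge> 0 \<and> b i \<ge> 0) \<and>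
     (\<forall>l. l \<ge> \<nu> \<longrightarrow> a l = 0) \<and> (\<forall>l. l \<le> \<mu> \<longrightarrow> b l = 0) \<and>
     total a = total b \<and>
     (\<forall>l. \<mu> < l \<and> l < \<nu> \<longrightarrow> psum_le b l < psum_lt a l) \<and>
     (cubic \<longrightarrow> \<not> (n \<ge> 2 \<and> \<mu> = \<nu> - 1)))"

definition cond3 :: "bool \<Rightarrow> (int \<Rightarrow> int) \<Rightarrow> (int \<Rightarrow> int) \<Rightarrow> bool" where
  "cond3 cubic a b = (let m = total a; n = total b in
     (\<forall>i. a i \<ge> 0 \<and> b i \<ge> 0) \<and>
     m = n \<and>
     (\<forall>\<alpha> \<beta>::nat. 1 \<le> \<alpha> \<and> int \<alpha> \<le> m \<and> 1 \<le> \<beta> \<and> int \<beta> \<le> n \<and> \<beta> + 1 \<ge> \<alpha>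
        \<longrightarrow> Sseq a \<alpha> < Sseq b \<beta>) \<and>
     (cubic \<longrightarrow> \<not> (n \<ge> 2 \<and>
        (\<forall>\<alpha> \<beta>::nat. 1 \<le> \<alpha> \<and> int \<alpha> \<le> m \<and> 1 \<le> \<beta> \<and> int \<beta> \<le> n
           \<longrightarrow> Sseq b \<beta> - Sseq a \<alpha> = 1))))"

end

theory Submission imports Defs begin

lemma ple_U: "finite U \<Longrightarrow> supp c \<subseteq> U \<Longrightarrow> psum_le c l = (\<Sum>i\<in>{i\<in>U. i \<le> l}. c i)"
  unfolding psum_le_def by (rule sum.mono_neutral_left) (auto simp: supp_def)

lemma plt_U: "finite U \<Longrightarrow> supp c \<subseteq> U \<Longrightarrow> psum_lt c l = (\<Sum>i\<in>{i\<in>U. i < l}. c i)"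
  unfolding psum_lt_def by (rule sum.mono_neutral_left) (auto simp: supp_def)

lemma total_U: "finite U \<Longrightarrow> supp c \<subseteq> U \<Longrightarrow> total c = (\<Sum>i\<in>U. c i)"
  unfolding total_def by (rule sum.mono_neutral_left) (auto simp: supp_def)

lemma supp_diff: "supp (\<lambda>i. a i - b i) \<subseteq> supp a \<union> supp b"
  by (auto simp: supp_def)

lemma ple_diff:
  assumes "finite (supp a)" "finite (supp b)"
  shows "psum_le (\<lambda>i. a i - b i) l = psum_le a l - psum_le b l"
proof -
  let ?U = "supp a \<union> supp b"
  have "psum_le (\<lambda>i. a i - b i) l = (\<Sum>i\<in>{i\<in>?U. i \<le> l}. a i - b i)"
    using assms supp_diff by (intro ple_U) auto
  also have "\<dots> = psum_le a l - psum_le b l"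
    using assms by (simp add: sum_subtractf ple_U[of ?U a] ple_U[of ?U b])
  finally show ?thesis .
qed

lemma total_diff:
  assumes "finite (supp a)" "finite (supp b)"
  shows "total (\<lambda>i. a i - b i) = total a - total b"
proof -
  let ?U = "supp a \<union> supp b"
  have "total (\<lambda>i. a i - b i) = (\<Sum>i\<in>?U. a i - b i)"
    using assms supp_diff by (intro total_U) auto
  also have "\<dots> = total a - total b"
    using assms by (simp add: sum_subtractf total_U[of ?U a] total_U[of ?U b])
  finally show ?thesis .
qed

lemma ple_split:
  assumes "finite (supp c)"
  shows "psum_le c l = psum_lt c l + c l"
proof -
  let ?U = "insert l (supp c)"
  have "psum_le c l = (\<Sum>i\<in>{i\<in>?U. i \<le> l}. c i)" using assms by (intro ple_U) auto
  also have "{i\<in>?U. i \<le> l} = insert l {i\<in>?U. i < l}" by auto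
  also have "(\<Sum>i\<in>insert l {i\<in>?U. i < l}. c i) = c l + (\<Sum>i\<in>{i\<in>?U. i < l}. c i)"
    using assms by (intro sum.insert) auto
  also have "(\<Sum>i\<in>{i\<in>?U. i < l}. c i) = psum_lt c l" using assms by (intro plt_U[symmetric]) auto
  finally show ?thesis by simp
qed

lemma plt_eq: "psum_lt c l = psum_le c (l - 1)"
  unfolding psum_lt_def psum_le_def by (rule sum.cong) auto

lemma ple_mono:
  assumes "finite (supp c)" "\<forall>i. c i \<ge> 0" "k \<le> l"
  shows "psum_le c k \<le> psum_le c l"
  unfolding psum_le_def using assms by (intro sum_mono2) auto

lemma ple_nonneg:
  assumes "\<forall>i. c i \<ge> 0"
  shows "psum_le c l \<ge> 0"
  unfolding psum_le_def using assms by (intro sum_nonneg) auto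

lemma elem_le_ple:
  assumes "finite (supp c)" "\<forall>i. c i \<ge> 0" "k \<le> l"
  shows "c k \<le> psum_le c l"
proof (cases "c k = 0")
  case True thus ?thesis using ple_nonneg[OF assms(2)] by simp
next
  case False
  thus ?thesis unfolding psum_le_def using assms
    by (intro member_le_sum) (auto simp: supp_def)
qed

lemma ple_low:
  assumes "\<forall>i. i \<le> l \<longrightarrow> c i = 0"
  shows "psum_le c l = 0"
  unfolding psum_le_def using assms by (intro sum.neutral) auto

lemma ple_high:
  assumes "\<forall>i. i > l \<longrightarrow> c i = 0"
  shows "psum_le c l = total c"
  unfolding psum_le_def total_def using assms
  by (intro sum.cong) (auto simp: supp_def, metis not_le)

lemma ple_le_total:
  assumes "finite (supp c)" "\<forall>i. c i \<ge> 0"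
  shows "psum_le c l \<le> total c"
  unfolding psum_le_def total_def using assms by (intro sum_mono2) auto

lemma ple_plus_le_total:
  assumes "finite (supp c)" "\<forall>i. c i \<ge> 0" "k > l" "c k \<noteq> 0"
  shows "psum_le c l + c k \<le> total c"
proof -
  have "psum_le c l + c k = (\<Sum>i\<in>insert k {i\<in>supp c. i \<le> l}. c i)"
    unfolding psum_le_def using assms by (subst sum.insert) auto
  also have "\<dots> \<le> total c" unfolding total_def using assms
    by (intro sum_mono2) (auto simp: supp_def)
  finally show ?thesis .
qed

lemma total_pos:
  assumes "finite (supp c)" "\<forall>i. c i \<ge> 0" "c \<noteq> (\<lambda>_. 0)"
  shows "total c > 0"
proof -
  obtain k where k: "c k \<noteq> 0" using assms(3) by auto
  have "c k \<le> total c" unfolding total_def using assms k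
    by (intro member_le_sum) (auto simp: supp_def)
  thus ?thesis using k assms(2) by (metis order.not_eq_order_implies_strict order_less_le_trans)
qed

lemma total_single:
  assumes "supp c \<subseteq> {k}"
  shows "total c = c k"
  using total_U[of "{k}" c] assms by simp


lemma sorted_concat_rep:
  "sorted xs \<Longrightarrow> sorted (concat (map (\<lambda>i. replicate (f i) i) xs))"
proof (induction xs)
  case Nil then show ?case by simp
next
  case (Cons x xs)
  then show ?case by (auto simp: sorted_append)
qed

lemma count_concat_rep:
  assumes "distinct xs" "\<forall>i. c i \<ge> 0"
  shows "int (length (filter P (concat (map (\<lambda>i. replicate (nat (c i)) i) xs))))
         = (\<Sum>i\<in>{i\<in>set xs. P i}. c i)"
  using assms(1)
proof (induction xs)
  case Nil then show ?case by simp
next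
  case (Cons x xs)
  show ?case
  proof (cases "P x")
    case True
    have "{i\<in>set (x#xs). P i} = insert x {i\<in>set xs. P i}" using True by auto
    then show ?thesis using Cons True assms(2) by (simp add: sum.insert)
  next
    case False
    have "{i\<in>set (x#xs). P i} = {i\<in>set xs. P i}" using False by auto
    then show ?thesis using Cons False by simp
  qed
qed

lemma Slist_sorted: "sorted (Slist c)"
  unfolding Slist_def by (intro sorted_concat_rep) simp

lemma Slist_count:
  assumes "finite (supp c)" "\<forall>i. c i \<ge> 0"
  shows "int (length (filter (\<lambda>x. x \<le> l) (Slist c))) = psum_le c l"
  unfolding Slist_def psum_le_def
  using count_concat_rep[of "sorted_list_of_set (supp c)" c "\<lambda>x. x \<le> l"] assms by simp

lemma Slist_length:
  assumes "finite (supp c)" "\<forall>i. c i \<ge> 0"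
  shows "int (length (Slist c)) = total c"
  unfolding Slist_def total_def
  using count_concat_rep[of "sorted_list_of_set (supp c)" c "\<lambda>x. True"] assms by simp

lemma Slist_set: "set (Slist c) \<subseteq> supp c"
  unfolding Slist_def by (auto simp: supp_def)

lemma sorted_nth_le:
  "sorted xs \<Longrightarrow> k < length xs \<Longrightarrow> (xs ! k \<le> l \<longleftrightarrow> k < length (filter (\<lambda>x. x \<le> l) xs))"
proof (induction xs arbitrary: k)
  case Nil then show ?case by simp
next
  case (Cons x xs)
  show ?case
  proof (cases "x \<le> l")
    case True
    then show ?thesis using Cons by (cases k) auto
  next
    case False
    have "filter (\<lambda>x. x \<le> l) xs = []" using Cons.prems False by (auto simp: filter_empty_conv)
    moreover have "(x#xs) ! k \<ge> x" using Cons.prems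
      by (cases k) auto
    ultimately show ?thesis using False by auto
  qed
qed

lemma Sseq_le:
  assumes "finite (supp c)" "\<forall>i. c i \<ge> 0" "1 \<le> \<alpha>" "int \<alpha> \<le> total c"
  shows "Sseq c \<alpha> \<le> l \<longleftrightarrow> int \<alpha> \<le> psum_le c l"
proof -
  have len: "\<alpha> - 1 < length (Slist c)" using Slist_length[OF assms(1,2)] assms(3,4) by linarith
  have "Sseq c \<alpha> \<le> l \<longleftrightarrow> \<alpha> - 1 < length (filter (\<lambda>x. x \<le> l) (Slist c))"
    unfolding Sseq_def by (rule sorted_nth_le[OF Slist_sorted len])
  also have "\<dots> \<longleftrightarrow> int \<alpha> \<le> psum_le c l" using Slist_count[OF assms(1,2), of l] assms(3) by linarith
  finally show ?thesis .
qed

lemma Sseq_in: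
  assumes "finite (supp c)" "\<forall>i. c i \<ge> 0" "1 \<le> \<alpha>" "int \<alpha> \<le> total c"
  shows "Sseq c \<alpha> \<in> supp c"
proof -
  have len: "\<alpha> - 1 < length (Slist c)" using Slist_length[OF assms(1,2)] assms(3,4) by linarith
  show ?thesis unfolding Sseq_def using nth_mem[OF len] Slist_set by blast
qed


lemma c1_imp_c2:
  assumes fa: "finite (supp a)" and fb: "finite (supp b)"
    and an: "a \<noteq> (\<lambda>_. 0)" and bn: "b \<noteq> (\<lambda>_. 0)"
    and c1: "cond1 cubic a b"
  shows "cond2 cubic a b"
proof -
  define q where "q = (\<lambda>i. a i - b i)"
  define \<mu> where "\<mu> = Min (supp q)"
  define \<nu> where "\<nu> = Max (supp q)"
  have fq: "finite (supp q)" unfolding q_def using supp_diff[of a b] fa fb finite_subset by blast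
  have ne: "supp q \<noteq> {}"
   and Ha: "\<forall>l. (l < \<mu> \<or> l \<ge> \<nu>) \<longrightarrow> a l = 0"
   and amu: "a \<mu> = q \<mu>" and qmu: "q \<mu> > 0" and tq: "total q = 0"
   and D: "\<forall>l. \<mu> < l \<and> l < \<nu> \<longrightarrow> max (q l) 0 \<le> a l \<and> a l < psum_le q l"
   and E: "cubic \<longrightarrow> \<not> (a \<mu> \<ge> 2 \<and> \<mu> = \<nu> - 1)"
    using c1 unfolding cond1_def Let_def q_def[symmetric] \<mu>_def[symmetric] \<nu>_def[symmetric] by auto
  have qout: "q l = 0" if "l < \<mu> \<or> l > \<nu>" for l
  proof (rule ccontr)
    assume "q l \<noteq> 0" hence "l \<in> supp q" by (simp add: supp_def)
    thus False using that fq unfolding \<mu>_def \<nu>_def by (meson Max_ge Min_le leD)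
  qed
  have numu: "\<mu> \<le> \<nu>" unfolding \<mu>_def \<nu>_def using Min_in[OF fq ne] Max_ge[OF fq] by blast
  have qnu: "q \<nu> \<noteq> 0" using Max_in[OF fq ne] unfolding \<nu>_def supp_def by simp
  have tq2: "total q = psum_le q (\<nu> - 1) + q \<nu>"
    using ple_high[of \<nu> q] qout ple_split[OF fq, of \<nu>] plt_eq[of q \<nu>] by auto
  have mune: "\<mu> \<noteq> \<nu>"
  proof
    assume "\<mu> = \<nu>"
    hence "supp q \<subseteq> {\<mu>}" using qout by (auto simp: supp_def) (meson linorder_neqE)
    hence "total q = q \<mu>" by (rule total_single)
    thus False using tq qmu by simp
  qed
  have Qpos: "psum_le q (\<nu> - 1) > 0"
  proof (cases "\<nu> - 1 = \<mu>")
    case True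
    have "psum_le q \<mu> = psum_lt q \<mu> + q \<mu>" by (rule ple_split[OF fq])
    moreover have "psum_lt q \<mu> = 0" using ple_low[of "\<mu> - 1" q] qout plt_eq[of q \<mu>] by auto
    ultimately show ?thesis using True qmu by simp
  next
    case False
    hence "\<mu> < \<nu> - 1" using numu mune by simp
    thus ?thesis using D[rule_format, of "\<nu> - 1"] by auto
  qed
  have qnuneg: "q \<nu> < 0" using tq tq2 Qpos by simp
  have anonneg: "a i \<ge> 0" for i
    using Ha D amu qmu by (metis linorder_not_le max.bounded_iff order.strict_iff_not order_le_less)
  have bdef: "b i = a i - q i" for i unfolding q_def by simp
  have bnonneg: "b i \<ge> 0" for i
  proof -
    consider "i < \<mu>" | "i = \<mu>" | "\<mu> < i \<and> i < \<nu>" | "i = \<nu>" | "i > \<nu>" by linarith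
    thus ?thesis
    proof cases
      case 1 thus ?thesis using Ha qout bdef by simp
    next
      case 2 thus ?thesis using amu bdef by simp
    next
      case 3 thus ?thesis using D bdef by force
    next
      case 4 thus ?thesis using Ha qnuneg bdef by simp
    next
      case 5 thus ?thesis using Ha qout bdef by simp
    qed
  qed
  have amin: "Min (supp a) = \<mu>"
    using fa Ha amu qmu by (intro Min_eqI) (auto simp: supp_def, meson not_le)
  have bmax: "Max (supp b) = \<nu>"
  proof (intro Max_eqI[OF fb])
    show "\<nu> \<in> supp b" using bdef Ha qnuneg by (simp add: supp_def)
    fix y assume "y \<in> supp b"
    thus "y \<le> \<nu>" using bdef Ha qout by (cases "y \<le> \<nu>") (auto simp: supp_def)
  qed
  have tab: "total a = total b" using total_diff[OF fa fb] tq unfolding q_def by simp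
  have blow: "b l = 0" if "l \<le> \<mu>" for l
    using that bdef Ha qout amu by (cases "l = \<mu>") auto
  have Dd: "psum_le b l < psum_lt a l" if "\<mu> < l" "l < \<nu>" for l
    using D that ple_diff[OF fa fb, of l] ple_split[OF fa, of l] unfolding q_def by force
  have Ee: "cubic \<longrightarrow> \<not> (total b \<ge> 2 \<and> \<mu> = \<nu> - 1)"
  proof (intro impI notI)
    assume cub: cubic and h: "total b \<ge> 2 \<and> \<mu> = \<nu> - 1"
    have "supp a \<subseteq> {\<mu>}"
    proof
      fix x assume "x \<in> supp a"
      hence "\<not> x < \<mu>" "\<not> x \<ge> \<nu>" using Ha by (auto simp: supp_def)
      thus "x \<in> {\<mu>}" using h by simp
    qed
    hence "total a = a \<mu>" by (rule total_single)
    thus False using E cub h tab by (elim conjE) simp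
  qed
  show ?thesis unfolding cond2_def Let_def amin bmax
    using anonneg bnonneg Ha blow tab Dd Ee by auto
qed

lemma c2_imp_c1:
  assumes fa: "finite (supp a)" and fb: "finite (supp b)"
    and an: "a \<noteq> (\<lambda>_. 0)" and bn: "b \<noteq> (\<lambda>_. 0)"
    and c2: "cond2 cubic a b"
  shows "cond1 cubic a b"
proof -
  define q where "q = (\<lambda>i. a i - b i)"
  define \<mu> where "\<mu> = Min (supp a)"
  define \<nu> where "\<nu> = Max (supp b)"
  have nn: "\<forall>i. a i \<ge> 0 \<and> b i \<ge> 0"
   and ahi: "\<forall>l. l \<ge> \<nu> \<longrightarrow> a l = 0" and blo: "\<forall>l. l \<le> \<mu> \<longrightarrow> b l = 0"
   and tab: "total a = total b"
   and D: "\<forall>l. \<mu> < l \<and> l < \<nu> \<longrightarrow> psum_le b l < psum_lt a l"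
   and E: "cubic \<longrightarrow> \<not> (total b \<ge> 2 \<and> \<mu> = \<nu> - 1)"
    using c2 unfolding cond2_def Let_def \<mu>_def[symmetric] \<nu>_def[symmetric] by auto
  have nea: "supp a \<noteq> {}" using an by (auto simp: supp_def)
  have neb: "supp b \<noteq> {}" using bn by (auto simp: supp_def)
  have amu: "a \<mu> > 0" using Min_in[OF fa nea] nn unfolding \<mu>_def supp_def
    by (metis mem_Collect_eq order_le_less)
  have bnu: "b \<nu> > 0" using Max_in[OF fb neb] nn unfolding \<nu>_def supp_def
    by (metis mem_Collect_eq order_le_less)
  have alow: "a l = 0" if "l < \<mu>" for l
    using that fa unfolding \<mu>_def supp_def by (metis Min_le mem_Collect_eq not_le)
  have bhi: "b l = 0" if "l > \<nu>" for l
    using that fb unfolding \<nu>_def supp_def by (metis Max_ge mem_Collect_eq not_le)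
  have munu: "\<mu> < \<nu>" using ahi amu by (metis less_irrefl not_le)
  have fq: "finite (supp q)" unfolding q_def using supp_diff[of a b] fa fb finite_subset by blast
  have qmin: "Min (supp q) = \<mu>"
  proof (intro Min_eqI[OF fq])
    show "\<mu> \<in> supp q" using amu blo by (simp add: supp_def q_def)
    fix y assume "y \<in> supp q"
    thus "\<mu> \<le> y" using alow blo by (cases "\<mu> \<le> y") (auto simp: supp_def q_def)
  qed
  have qmax: "Max (supp q) = \<nu>"
  proof (intro Max_eqI[OF fq])
    show "\<nu> \<in> supp q" using ahi bnu by (simp add: supp_def q_def)
    fix y assume "y \<in> supp q"
    thus "y \<le> \<nu>" using ahi bhi by (cases "y \<le> \<nu>") (auto simp: supp_def q_def)
  qed
  have neq: "supp q \<noteq> {}" using amu blo by (auto simp: supp_def q_def intro!: exI[of _ \<mu>])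
  have tq: "total q = 0" using total_diff[OF fa fb] tab unfolding q_def by simp
  have Dd: "max (q l) 0 \<le> a l \<and> a l < psum_le q l" if "\<mu> < l" "l < \<nu>" for l
    using D that nn ple_diff[OF fa fb, of l] ple_split[OF fa, of l] unfolding q_def by force
  have Ee: "cubic \<longrightarrow> \<not> (a \<mu> \<ge> 2 \<and> \<mu> = \<nu> - 1)"
  proof (intro impI notI)
    assume cub: cubic and h: "a \<mu> \<ge> 2 \<and> \<mu> = \<nu> - 1"
    have "supp a \<subseteq> {\<mu>}"
    proof
      fix x assume "x \<in> supp a"
      hence "\<not> x < \<mu>" "\<not> x \<ge> \<nu>" using alow ahi by (auto simp: supp_def)
      thus "x \<in> {\<mu>}" using h by simp
    qed
    hence "total a = a \<mu>" by (rule total_single)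
    thus False using E cub h tab by (elim conjE) simp
  qed
  show ?thesis unfolding cond1_def Let_def q_def[symmetric] qmin qmax
    using neq alow ahi amu blo tq Dd Ee unfolding q_def by auto
qed


lemma c3c_iff_P:
  assumes fa: "finite (supp a)" and fb: "finite (supp b)"
    and nn: "\<forall>i. a i \<ge> 0 \<and> b i \<ge> 0" and tab: "total a = total b"
  shows "(\<forall>\<alpha> \<beta>::nat. 1 \<le> \<alpha> \<and> int \<alpha> \<le> total a \<and> 1 \<le> \<beta> \<and> int \<beta> \<le> total b \<and> \<beta> + 1 \<ge> \<alpha>
        \<longrightarrow> Sseq a \<alpha> < Sseq b \<beta>) \<longleftrightarrow> (\<forall>l\<in>supp a. psum_le b l < max 1 (psum_lt a l))"
proof -
  have na: "\<forall>i. a i \<ge> 0" and nb: "\<forall>i. b i \<ge> 0" using nn by auto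
  show ?thesis
  proof
    assume C: "\<forall>\<alpha> \<beta>::nat. 1 \<le> \<alpha> \<and> int \<alpha> \<le> total a \<and> 1 \<le> \<beta> \<and> int \<beta> \<le> total b \<and> \<beta> + 1 \<ge> \<alpha>
        \<longrightarrow> Sseq a \<alpha> < Sseq b \<beta>"
    show "\<forall>l\<in>supp a. psum_le b l < max 1 (psum_lt a l)"
    proof
      fix l assume l: "l \<in> supp a"
      have al: "a l > 0" using l na[rule_format, of l] by (simp add: supp_def)
      have p0: "psum_lt a l \<ge> 0" using plt_eq[of a l] ple_nonneg[OF na] by simp
      define \<alpha> where "\<alpha> = nat (psum_lt a l) + 1"
      define \<beta> where "\<beta> = max 1 (nat (psum_lt a l))"
      have Al: "psum_le a l = psum_lt a l + a l" by (rule ple_split[OF fa])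
      have AT: "psum_le a l \<le> total a" by (rule ple_le_total[OF fa na])
      have a1: "1 \<le> \<alpha>" and a2: "int \<alpha> \<le> total a" using Al AT al p0 unfolding \<alpha>_def by auto
      have b1: "1 \<le> \<beta>" and b2: "int \<beta> \<le> total b" and b3: "\<beta> + 1 \<ge> \<alpha>"
        using a2 tab p0 unfolding \<alpha>_def \<beta>_def by auto
      have "Sseq a \<alpha> \<le> l" using Sseq_le[OF fa na a1 a2, of l] Al al p0 unfolding \<alpha>_def by simp
      moreover have "\<not> Sseq a \<alpha> \<le> l - 1" using Sseq_le[OF fa na a1 a2, of "l - 1"] plt_eq[of a l] p0
        unfolding \<alpha>_def by simp
      ultimately have "Sseq a \<alpha> = l" by simp
      hence "l < Sseq b \<beta>" using C a1 a2 b1 b2 b3 by auto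
      hence "\<not> int \<beta> \<le> psum_le b l" using Sseq_le[OF fb nb b1 b2, of l] by simp
      thus "psum_le b l < max 1 (psum_lt a l)" using p0 unfolding \<beta>_def by auto
    qed
  next
    assume P: "\<forall>l\<in>supp a. psum_le b l < max 1 (psum_lt a l)"
    show "\<forall>\<alpha> \<beta>::nat. 1 \<le> \<alpha> \<and> int \<alpha> \<le> total a \<and> 1 \<le> \<beta> \<and> int \<beta> \<le> total b \<and> \<beta> + 1 \<ge> \<alpha>
        \<longrightarrow> Sseq a \<alpha> < Sseq b \<beta>"
    proof (intro allI impI)
      fix \<alpha> \<beta> :: nat
      assume h: "1 \<le> \<alpha> \<and> int \<alpha> \<le> total a \<and> 1 \<le> \<beta> \<and> int \<beta> \<le> total b \<and> \<beta> + 1 \<ge> \<alpha>"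
      hence a1: "1 \<le> \<alpha>" and a2: "int \<alpha> \<le> total a" and b1: "1 \<le> \<beta>" and b2: "int \<beta> \<le> total b"
        and b3: "\<beta> + 1 \<ge> \<alpha>" by auto
      define l where "l = Sseq a \<alpha>"
      have lin: "l \<in> supp a" unfolding l_def by (rule Sseq_in[OF fa na a1 a2])
      have "\<not> l \<le> l - 1" by simp
      hence "\<not> int \<alpha> \<le> psum_le a (l - 1)" using Sseq_le[OF fa na a1 a2, of "l - 1"] unfolding l_def by simp
      hence "psum_lt a l \<le> int \<beta>" using plt_eq[of a l] b3 by simp
      hence "psum_le b l < int \<beta>" using P lin b1 by fastforce
      hence "\<not> Sseq b \<beta> \<le> l" using Sseq_le[OF fb nb b1 b2, of l] by simp
      thus "Sseq a \<alpha> < Sseq b \<beta>" unfolding l_def by simp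
    qed
  qed
qed


lemma P_iff_bd:
  assumes fa: "finite (supp a)" and fb: "finite (supp b)"
    and nn: "\<forall>i. a i \<ge> 0 \<and> b i \<ge> 0" and tab: "total a = total b"
    and an: "a \<noteq> (\<lambda>_. 0)" and bn: "b \<noteq> (\<lambda>_. 0)"
  shows "(\<forall>l\<in>supp a. psum_le b l < max 1 (psum_lt a l)) \<longleftrightarrow>
     ((\<forall>l. l \<ge> Max (supp b) \<longrightarrow> a l = 0) \<and> (\<forall>l. l \<le> Min (supp a) \<longrightarrow> b l = 0) \<and>
      (\<forall>l. Min (supp a) < l \<and> l < Max (supp b) \<longrightarrow> psum_le b l < psum_lt a l))"
proof -
  define \<mu> where "\<mu> = Min (supp a)"
  define \<nu> where "\<nu> = Max (supp b)"
  have na: "\<forall>i. a i \<ge> 0" and nb: "\<forall>i. b i \<ge> 0" using nn by auto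
  have nea: "supp a \<noteq> {}" using an by (auto simp: supp_def)
  have neb: "supp b \<noteq> {}" using bn by (auto simp: supp_def)
  have amu: "a \<mu> > 0" using Min_in[OF fa nea] na unfolding \<mu>_def supp_def
    by (metis mem_Collect_eq order_le_less)
  have bnu: "b \<nu> > 0" using Max_in[OF fb neb] nb unfolding \<nu>_def supp_def
    by (metis mem_Collect_eq order_le_less)
  have alow: "a l = 0" if "l < \<mu>" for l
    using that fa unfolding \<mu>_def supp_def by (metis Min_le mem_Collect_eq not_le)
  have bhi: "b l = 0" if "l > \<nu>" for l
    using that fb unfolding \<nu>_def supp_def by (metis Max_ge mem_Collect_eq not_le)
  have mule: "\<mu> \<le> l" if "l \<in> supp a" for l
    using that fa unfolding \<mu>_def by simp
  have N1: "total b \<ge> 1" using total_pos[OF fb nb bn] by simp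
  have Bhi: "psum_le b l = total b" if "l \<ge> \<nu>" for l using ple_high[of l b] bhi that by auto
  have Bnu: "psum_le b l + b \<nu> \<le> total b" if "l < \<nu>" for l
    using ple_plus_le_total[OF fb nb that] bnu by simp
  have pltmu: "psum_lt a \<mu> = 0" using plt_eq[of a \<mu>] ple_low[of "\<mu> - 1" a] alow by auto
  have Alt1: "psum_lt a l \<ge> 1" if "\<mu> < l" for l
    using plt_eq[of a l] elem_le_ple[OF fa na, of \<mu> "l - 1"] that amu by simp
  show ?thesis unfolding \<mu>_def[symmetric] \<nu>_def[symmetric]
  proof
    assume P: "\<forall>l\<in>supp a. psum_le b l < max 1 (psum_lt a l)"
    have blo: "b l = 0" if "l \<le> \<mu>" for l
    proof -
      have "\<mu> \<in> supp a" using Min_in[OF fa nea] unfolding \<mu>_def .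
      hence "psum_le b \<mu> < 1" using P pltmu by force
      moreover have "b l \<le> psum_le b \<mu>" by (rule elem_le_ple[OF fb nb that])
      ultimately show ?thesis using nb[rule_format, of l] by simp
    qed
    have ahi: "a l = 0" if "l \<ge> \<nu>" for l
    proof (rule ccontr)
      assume "a l \<noteq> 0"
      hence lin: "l \<in> supp a" and al: "a l > 0" using na[rule_format, of l] by (auto simp: supp_def)
      have "psum_lt a l + a l \<le> total a" using ple_split[OF fa, of l] ple_le_total[OF fa na, of l] by simp
      hence "max 1 (psum_lt a l) \<le> total b" using al tab N1 by simp
      thus False using P lin Bhi[OF that] by force
    qed
    have dd: "psum_le b l < psum_lt a l" if l: "\<mu> < l" "l < \<nu>" for l
    proof (cases "l \<in> supp a")
      case True
      thus ?thesis using P Alt1[OF l(1)] by force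
    next
      case False
      hence al0: "a l = 0" by (simp add: supp_def)
      have eqA: "psum_lt a l = psum_le a l" using ple_split[OF fa, of l] al0 by simp
      show ?thesis
      proof (cases "\<exists>k\<in>supp a. k > l")
        case True
        define K where "K = {k\<in>supp a. k > l}"
        have fK: "finite K" and neK: "K \<noteq> {}" using fa True unfolding K_def by auto
        define k0 where "k0 = Min K"
        have k0in: "k0 \<in> supp a" "k0 > l" using Min_in[OF fK neK] unfolding k0_def K_def by auto
        have k0min: "\<And>i. i \<in> supp a \<Longrightarrow> i > l \<Longrightarrow> k0 \<le> i" using fK unfolding k0_def K_def by simp
        have "{i\<in>supp a. i < k0} = {i\<in>supp a. i \<le> l}"
          using k0in k0min by force
        hence "psum_lt a k0 = psum_le a l" unfolding psum_lt_def psum_le_def by simp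
        moreover have "psum_le b l \<le> psum_le b k0" using ple_mono[OF fb nb] k0in by simp
        moreover have "psum_le b k0 < max 1 (psum_lt a k0)" using P k0in by blast
        ultimately show ?thesis using eqA Alt1[OF l(1)] by simp
      next
        case False
        hence "psum_le a l = total a" using ple_high[of l a] by (auto simp: supp_def)
        thus ?thesis using eqA tab Bnu[OF l(2)] bnu by simp
      qed
    qed
    show "(\<forall>l. l \<ge> \<nu> \<longrightarrow> a l = 0) \<and> (\<forall>l. l \<le> \<mu> \<longrightarrow> b l = 0) \<and>
      (\<forall>l. \<mu> < l \<and> l < \<nu> \<longrightarrow> psum_le b l < psum_lt a l)" using blo ahi dd by auto
  next
    assume H: "(\<forall>l. l \<ge> \<nu> \<longrightarrow> a l = 0) \<and> (\<forall>l. l \<le> \<mu> \<longrightarrow> b l = 0) \<and>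
      (\<forall>l. \<mu> < l \<and> l < \<nu> \<longrightarrow> psum_le b l < psum_lt a l)"
    show "\<forall>l\<in>supp a. psum_le b l < max 1 (psum_lt a l)"
    proof
      fix l assume lin: "l \<in> supp a"
      have l1: "\<mu> \<le> l" by (rule mule[OF lin])
      have l2: "l < \<nu>" using H lin by (auto simp: supp_def) (meson not_le)
      show "psum_le b l < max 1 (psum_lt a l)"
      proof (cases "l = \<mu>")
        case True
        hence "psum_le b l = 0" using ple_low[of l b] H by auto
        thus ?thesis by simp
      next
        case False
        thus ?thesis using H l1 l2 by force
      qed
    qed
  qed
qed

lemma cub_iff:
  assumes fa: "finite (supp a)" and fb: "finite (supp b)"
    and nn: "\<forall>i. a i \<ge> 0 \<and> b i \<ge> 0" and tab: "total a = total b"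
    and an: "a \<noteq> (\<lambda>_. 0)" and bn: "b \<noteq> (\<lambda>_. 0)"
    and ahi: "\<forall>l. l \<ge> Max (supp b) \<longrightarrow> a l = 0" and blo: "\<forall>l. l \<le> Min (supp a) \<longrightarrow> b l = 0"
  shows "(\<forall>\<alpha> \<beta>::nat. 1 \<le> \<alpha> \<and> int \<alpha> \<le> total a \<and> 1 \<le> \<beta> \<and> int \<beta> \<le> total b
           \<longrightarrow> Sseq b \<beta> - Sseq a \<alpha> = 1) \<longleftrightarrow> Min (supp a) = Max (supp b) - 1"
proof -
  define \<mu> where "\<mu> = Min (supp a)"
  define \<nu> where "\<nu> = Max (supp b)"
  have na: "\<forall>i. a i \<ge> 0" and nb: "\<forall>i. b i \<ge> 0" using nn by auto
  have nea: "supp a \<noteq> {}" using an by (auto simp: supp_def)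
  have neb: "supp b \<noteq> {}" using bn by (auto simp: supp_def)
  have amu: "a \<mu> > 0" using Min_in[OF fa nea] na unfolding \<mu>_def supp_def
    by (metis mem_Collect_eq order_le_less)
  have bnu: "b \<nu> > 0" using Max_in[OF fb neb] nb unfolding \<nu>_def supp_def
    by (metis mem_Collect_eq order_le_less)
  have mule: "\<mu> \<le> l" if "l \<in> supp a" for l
    using that fa unfolding \<mu>_def by simp
  have nuge: "l \<le> \<nu>" if "l \<in> supp b" for l
    using that fb unfolding \<nu>_def by simp
  have ahi': "l < \<nu>" if "l \<in> supp a" for l using that ahi unfolding \<nu>_def[symmetric]
    by (cases "l < \<nu>") (auto simp: supp_def)
  have blo': "\<mu> < l" if "l \<in> supp b" for l using that blo unfolding \<mu>_def[symmetric]
    by (cases "\<mu> < l") (auto simp: supp_def)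
  have Na: "total a \<ge> 1" using total_pos[OF fa na an] by simp
  show ?thesis unfolding \<mu>_def[symmetric] \<nu>_def[symmetric]
  proof
    assume R: "\<forall>\<alpha> \<beta>::nat. 1 \<le> \<alpha> \<and> int \<alpha> \<le> total a \<and> 1 \<le> \<beta> \<and> int \<beta> \<le> total b
           \<longrightarrow> Sseq b \<beta> - Sseq a \<alpha> = 1"
    define N where "N = nat (total b)"
    have N1: "1 \<le> N" and N2: "int N \<le> total b" using Na tab unfolding N_def by auto
    have a1: "(1::nat) \<le> 1" and a2: "int 1 \<le> total a" using Na by auto
    have s1: "Sseq a 1 = \<mu>"
    proof -
      have "Sseq a 1 \<in> supp a" by (rule Sseq_in[OF fa na a1 a2])
      hence "\<mu> \<le> Sseq a 1" by (rule mule)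
      moreover have "Sseq a 1 \<le> \<mu>" using Sseq_le[OF fa na a1 a2, of \<mu>]
        elem_le_ple[OF fa na, of \<mu> \<mu>] amu by simp
      ultimately show ?thesis by simp
    qed
    have s2: "Sseq b N = \<nu>"
    proof -
      have "Sseq b N \<in> supp b" by (rule Sseq_in[OF fb nb N1 N2])
      hence "Sseq b N \<le> \<nu>" by (rule nuge)
      moreover have "\<not> Sseq b N \<le> \<nu> - 1"
      proof
        assume "Sseq b N \<le> \<nu> - 1"
        hence "int N \<le> psum_le b (\<nu> - 1)" using Sseq_le[OF fb nb N1 N2, of "\<nu> - 1"] by blast
        moreover have "psum_le b (\<nu> - 1) + b \<nu> \<le> total b"
          using ple_plus_le_total[OF fb nb, of "\<nu> - 1" \<nu>] bnu by simp
        ultimately show False using bnu Na tab unfolding N_def by simp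
      qed
      ultimately show ?thesis by simp
    qed
    have "Sseq b N - Sseq a 1 = 1" using R N1 N2 a2 by auto
    thus "\<mu> = \<nu> - 1" using s1 s2 by simp
  next
    assume h: "\<mu> = \<nu> - 1"
    show "\<forall>\<alpha> \<beta>::nat. 1 \<le> \<alpha> \<and> int \<alpha> \<le> total a \<and> 1 \<le> \<beta> \<and> int \<beta> \<le> total b
           \<longrightarrow> Sseq b \<beta> - Sseq a \<alpha> = 1"
    proof (intro allI impI)
      fix \<alpha> \<beta> :: nat
      assume "1 \<le> \<alpha> \<and> int \<alpha> \<le> total a \<and> 1 \<le> \<beta> \<and> int \<beta> \<le> total b"
      hence a1: "1 \<le> \<alpha>" and a2: "int \<alpha> \<le> total a" and b1: "1 \<le> \<beta>" and b2: "int \<beta> \<le> total b" by auto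
      have "Sseq a \<alpha> \<in> supp a" by (rule Sseq_in[OF fa na a1 a2])
      hence x: "Sseq a \<alpha> = \<mu>" using mule ahi' h by force
      have "Sseq b \<beta> \<in> supp b" by (rule Sseq_in[OF fb nb b1 b2])
      hence y: "Sseq b \<beta> = \<nu>" using nuge blo' h by force
      show "Sseq b \<beta> - Sseq a \<alpha> = 1" using x y h by simp
    qed
  qed
qed


lemma c2_iff_c3:
  assumes fa: "finite (supp a)" and fb: "finite (supp b)"
    and an: "a \<noteq> (\<lambda>_. 0)" and bn: "b \<noteq> (\<lambda>_. 0)"
  shows "cond2 cubic a b \<longleftrightarrow> cond3 cubic a b"
proof
  assume c2: "cond2 cubic a b"
  have nn: "\<forall>i. a i \<ge> 0 \<and> b i \<ge> 0"
   and ahi: "\<forall>l. l \<ge> Max (supp b) \<longrightarrow> a l = 0" and blo: "\<forall>l. l \<le> Min (supp a) \<longrightarrow> b l = 0"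
   and tab: "total a = total b"
   and D: "\<forall>l. Min (supp a) < l \<and> l < Max (supp b) \<longrightarrow> psum_le b l < psum_lt a l"
   and E: "cubic \<longrightarrow> \<not> (total b \<ge> 2 \<and> Min (supp a) = Max (supp b) - 1)"
    using c2 unfolding cond2_def Let_def by auto
  have P: "\<forall>l\<in>supp a. psum_le b l < max 1 (psum_lt a l)"
    using P_iff_bd[OF fa fb nn tab an bn] ahi blo D by blast
  have C: "\<forall>\<alpha> \<beta>::nat. 1 \<le> \<alpha> \<and> int \<alpha> \<le> total a \<and> 1 \<le> \<beta> \<and> int \<beta> \<le> total b \<and> \<beta> + 1 \<ge> \<alpha>
        \<longrightarrow> Sseq a \<alpha> < Sseq b \<beta>" using c3c_iff_P[OF fa fb nn tab] P by blast
  note cu = cub_iff[OF fa fb nn tab an bn ahi blo]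
  show "cond3 cubic a b" unfolding cond3_def Let_def
    using nn tab C E cu by auto
next
  assume c3: "cond3 cubic a b"
  have nn: "\<forall>i. a i \<ge> 0 \<and> b i \<ge> 0" and tab: "total a = total b"
   and C: "\<forall>\<alpha> \<beta>::nat. 1 \<le> \<alpha> \<and> int \<alpha> \<le> total a \<and> 1 \<le> \<beta> \<and> int \<beta> \<le> total b \<and> \<beta> + 1 \<ge> \<alpha>
        \<longrightarrow> Sseq a \<alpha> < Sseq b \<beta>"
   and E: "cubic \<longrightarrow> \<not> (total b \<ge> 2 \<and> (\<forall>\<alpha> \<beta>::nat. 1 \<le> \<alpha> \<and> int \<alpha> \<le> total a \<and> 1 \<le> \<beta> \<and> int \<beta> \<le> total b
           \<longrightarrow> Sseq b \<beta> - Sseq a \<alpha> = 1))"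
    using c3 unfolding cond3_def Let_def by auto
  have P: "\<forall>l\<in>supp a. psum_le b l < max 1 (psum_lt a l)" using c3c_iff_P[OF fa fb nn tab] C by blast
  have H: "(\<forall>l. l \<ge> Max (supp b) \<longrightarrow> a l = 0) \<and> (\<forall>l. l \<le> Min (supp a) \<longrightarrow> b l = 0) \<and>
      (\<forall>l. Min (supp a) < l \<and> l < Max (supp b) \<longrightarrow> psum_le b l < psum_lt a l)"
    using P_iff_bd[OF fa fb nn tab an bn] P by blast
  hence ahi: "\<forall>l. l \<ge> Max (supp b) \<longrightarrow> a l = 0" and blo: "\<forall>l. l \<le> Min (supp a) \<longrightarrow> b l = 0" by auto
  note cu = cub_iff[OF fa fb nn tab an bn ahi blo]
  show "cond2 cubic a b" unfolding cond2_def Let_def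
    using nn tab H E cu by auto
qed

theorem mainTheorem15:
  fixes cubic :: bool and a b :: "int \<Rightarrow> int"
  assumes "finite (supp a)" and "finite (supp b)"
    and "a \<noteq> (\<lambda>_. 0)" and "b \<noteq> (\<lambda>_. 0)"
  shows "(cond1 cubic a b \<longleftrightarrow> cond2 cubic a b) \<and> (cond2 cubic a b \<longleftrightarrow> cond3 cubic a b)"
  using c1_imp_c2[OF assms] c2_imp_c1[OF assms] c2_iff_c3[OF assms] by blast

end
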